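(* Let $(L_i)_{i\in\mathbb Z}$ be integers with $L_i\ge1$ and $|L_i-L_{i+1}|\le1$ for all $i$. Let $(x_i)_{i\in\mathbb Z}$ be real numbers. For each $i$, define $y_i(k)$ for $0\le k\le L_i$ by $y_i(0)=\frac{1}{2L_i+1}x_i$; $y_i(1)=y_i(0)+y_{i-1}(0)+y_{i+1}(0)$; $y_i(2)=y_i(1)+(y_{i-1}(1)-y_{i-1}(0))+(y_{i+1}(1)-y_{i+1}(0))-2y_i(0)$ (if $L_i\ge2$); and for $2\le k\le L_i-1$, $y_i(k+1)=y_i(k)+(y_{i-1}(k)-y_{i-1}(k-1))+(y_{i+1}(k)-y_{i+1}(k-1))-(y_i(k-1)-y_i(k-2))$. Then all quantities used in these updates are defined, and for every $i$, $$y_i(L_i)=\frac{1}{2L_i+1}x_i+\sum_{j=1}^{L_i}\Big(\frac{1}{2L_{i-j}+1}x_{i-j}+\frac{1}{2L_{i+j}+1}x_{i+j}\Big).$$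
   Context: Sensors indexed by $i\in\mathbb Z$ on a line, each with time-invariant measurement $x_i$, individual window parameter $L_i$, and consensus variable $y_i(k)$; communication only with immediate neighbors $i\pm1$. *)

theory Defs
  imports Main Complex_Main
begin

end

theory Submission
  imports Defs
begin


lemma sum_int_step:
  assumes "0 \<le> (k::int)" shows "sum f {1..k+1} = sum f {1..k} + (f (k+1) :: real)"
proof -
  have "{1..k+1} = insert (k+1) {1..k}" using assms by auto
  then show ?thesis by simp
qed

theorem mainTheorem4:
  fixes L :: "int \<Rightarrow> int" and x :: "int \<Rightarrow> real" and y :: "int \<Rightarrow> int \<Rightarrow> real"
  assumes L_pos: "\<And>i. L i \<ge> 1"
    and L_lip: "\<And>i. \<bar>L i - L (i + 1)\<bar> \<le> 1"
    and y0: "\<And>i. y i 0 = (1 / (2 * real_of_int (L i) + 1)) * x i"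
    and y1: "\<And>i. y i 1 = y i 0 + y (i - 1) 0 + y (i + 1) 0"
    and y2: "\<And>i. L i \<ge> 2 \<Longrightarrow>
              y i 2 = y i 1 + (y (i - 1) 1 - y (i - 1) 0) + (y (i + 1) 1 - y (i + 1) 0) - 2 * y i 0"
    and yrec: "\<And>i k. 2 \<le> k \<Longrightarrow> k \<le> L i - 1 \<Longrightarrow>
              y i (k + 1) = y i k + (y (i - 1) k - y (i - 1) (k - 1))
                 + (y (i + 1) k - y (i + 1) (k - 1)) - (y i (k - 1) - y i (k - 2))"
  shows "(\<forall>i. 0 \<le> L (i - 1) \<and> 0 \<le> L (i + 1)
            \<and> (L i \<ge> 2 \<longrightarrow> 1 \<le> L (i - 1) \<and> 1 \<le> L (i + 1))
            \<and> (\<forall>k. 2 \<le> k \<and> k \<le> L i - 1 \<longrightarrow> k \<le> L (i - 1) \<and> k \<le> L (i + 1)))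
       \<and> (\<forall>i. y i (L i) = (1 / (2 * real_of_int (L i) + 1)) * x i
            + (\<Sum>j = 1..L i. (1 / (2 * real_of_int (L (i - j)) + 1)) * x (i - j)
                             + (1 / (2 * real_of_int (L (i + j)) + 1)) * x (i + j)))"
  proof -
  define a where "a i = (1 / (2 * real_of_int (L i) + 1)) * x i" for i
  define S where "S k i = a i + (\<Sum>j = 1..k. a (i - j) + a (i + j))" for k i
  have Sstep: "S (k+1) i = S k i + a (i - (k+1)) + a (i + (k+1))" if "0 \<le> k" for k i
    using sum_int_step[OF that, of "\<lambda>j. a (i - j) + a (i + j)"] unfolding S_def by simp
  have S0: "S 0 i = a i" for i unfolding S_def by simp
  have lip1: "L (i - 1) \<ge> L i - 1 \<and> L (i - 1) \<le> L i + 1" for i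
    using L_lip[of "i - 1"] by auto
  have lip2: "L (i + 1) \<ge> L i - 1 \<and> L (i + 1) \<le> L i + 1" for i
    using L_lip[of i] by auto
  have main: "\<forall>i. int n \<le> L i \<longrightarrow> y i (int n) = S (int n) i" for n
  proof (induction n rule: less_induct)
    case (less n)
    show ?case
    proof (intro allI impI)
      fix i assume nL: "int n \<le> L i"
      consider "n = 0" | "n = 1" | "n = 2" | "n \<ge> 3" by arith
      then show "y i (int n) = S (int n) i"
      proof cases
        case 1 then show ?thesis using y0 S0 a_def by simp
      next
        case 2
        have "S 1 i = S 0 i + a (i - 1) + a (i + 1)" using Sstep[of 0 i] by simp
        then show ?thesis using 2 y1 y0 S0 a_def by simp
      next
        case 3
        have e1: "S 1 j = a j + a (j - 1) + a (j + 1)" for j using Sstep[of 0 j] S0 by simp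
        have e2: "S 2 i = S 1 i + a (i - 2) + a (i + 2)" using Sstep[of 1 i] by simp
        have "y i 2 = y i 1 + (y (i - 1) 1 - y (i - 1) 0) + (y (i + 1) 1 - y (i + 1) 0) - 2 * y i 0"
          using y2 nL 3 by simp
        moreover have "y j 1 = S 1 j" for j using y1 y0 e1 a_def by simp
        moreover have "y j 0 = a j" for j using y0 a_def by simp
        ultimately have "y i 2 = S 1 i + (S 1 (i - 1) - a (i - 1)) + (S 1 (i + 1) - a (i + 1)) - 2 * a i" by simp
        also have "\<dots> = S 2 i" using e1[of "i - 1"] e1[of "i + 1"] e1[of i] e2 by (simp add: algebra_simps)
        finally show ?thesis using 3 by simp
      next
        case 4
        define m where "m = n - 1"
        have 4: "n = m + 1" "m \<ge> 2" using 4 m_def by auto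
        define k where "k = int m"
        have k2: "2 \<le> k" using 4 k_def by simp
        have kL: "k \<le> L i - 1" using nL 4 k_def by simp
        have kl: "k \<le> L (i - 1)" "k \<le> L (i + 1)" using kL lip1[of i] lip2[of i] by auto
        have IH: "y j (int p) = S (int p) j" if "p < n" "int p \<le> L j" for p j
          using less.IH that by blast
        have ya: "y (i - 1) k = S k (i - 1)" using IH[of m "i - 1"] 4 k_def kl by simp
        have yb: "y (i - 1) (k - 1) = S (k - 1) (i - 1)" using IH[of "m - 1" "i - 1"] 4 k_def kl by (simp add: of_nat_diff)
        have yc: "y (i + 1) k = S k (i + 1)" using IH[of m "i + 1"] 4 k_def kl by simp
        have yd: "y (i + 1) (k - 1) = S (k - 1) (i + 1)" using IH[of "m - 1" "i + 1"] 4 k_def kl by (simp add: of_nat_diff)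
        have ye: "y i k = S k i" using IH[of m i] 4 k_def kL by simp
        have yf: "y i (k - 1) = S (k - 1) i" using IH[of "m - 1" i] 4 k_def kL by (simp add: of_nat_diff)
        have yg: "y i (k - 2) = S (k - 2) i" using IH[of "m - 2" i] 4 k_def kL by (simp add: of_nat_diff)
        have D: "S k j = S (k - 1) j + a (j - k) + a (j + k)" if "1 \<le> k" for k j
          using Sstep[of "k - 1" j] that by simp
        have "y i (k + 1) = y i k + (y (i - 1) k - y (i - 1) (k - 1))
                 + (y (i + 1) k - y (i + 1) (k - 1)) - (y i (k - 1) - y i (k - 2))"
          using yrec k2 kL by simp
        also have "\<dots> = S k i + (a (i - 1 - k) + a (i - 1 + k)) + (a (i + 1 - k) + a (i + 1 + k))
              - (a (i - (k - 1)) + a (i + (k - 1)))"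
        proof -
          have d1: "S k (i - 1) - S (k - 1) (i - 1) = a (i - 1 - k) + a (i - 1 + k)"
            using D[of k "i - 1"] k2 by simp
          have d2: "S k (i + 1) - S (k - 1) (i + 1) = a (i + 1 - k) + a (i + 1 + k)"
            using D[of k "i + 1"] k2 by simp
          have kk: "k - 1 - 1 = k - 2" by simp
          have d3: "S (k - 1) i - S (k - 2) i = a (i - (k - 1)) + a (i + (k - 1))"
            using D[of "k - 1" i] k2 unfolding kk by simp
          show ?thesis unfolding ya yb yc yd ye yf yg d1 d2 d3 by (rule refl)
        qed
        also have "\<dots> = S k i + a (i - (k + 1)) + a (i + (k + 1))"
        proof -
          have "i - 1 - k = i - (k + 1)" "i - 1 + k = i + (k - 1)" "i + 1 - k = i - (k - 1)" "i + 1 + k = i + (k + 1)" by simp_all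
          then show ?thesis by (simp only:)
        qed
        also have "\<dots> = S (k + 1) i" using Sstep[of k i] k2 by simp
        finally show ?thesis using 4 k_def by (simp add: add.commute)
      qed
    qed
  qed
  show ?thesis
  proof (intro conjI allI impI)
    fix i
    show "0 \<le> L (i - 1)" "0 \<le> L (i + 1)" using L_pos by (auto intro: order_trans[OF zero_le_one])
  next
    fix i assume "L i \<ge> 2" then show "1 \<le> L (i - 1)" "1 \<le> L (i + 1)" using L_pos by auto
  next
    fix i k assume "2 \<le> k \<and> k \<le> L i - 1"
    then show "k \<le> L (i - 1)" "k \<le> L (i + 1)" using lip1[of i] lip2[of i] by auto
  next
    fix i
    have "y i (int (nat (L i))) = S (int (nat (L i))) i" using main[of "nat (L i)"] L_pos[of i] by simp
    then show "y i (L i) = (1 / (2 * real_of_int (L i) + 1)) * x i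
            + (\<Sum>j = 1..L i. (1 / (2 * real_of_int (L (i - j)) + 1)) * x (i - j)
                             + (1 / (2 * real_of_int (L (i + j)) + 1)) * x (i + j))"
      using L_pos[of i] unfolding S_def a_def by simp
  qed
qed

end
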